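(* Let $\alpha\in(0,1)$ be irrational with $\alpha=[0;a_1,a_2,\dots]$. For each $n\ge1$ define the block $C_n$ by: if $a_n\ge2$, $C_n=(q_{n-2}+q_{n-1},\,q_{n-2}+2q_{n-1},\,\dots,\,q_{n-2}+(a_n-1)q_{n-1})$ (the $a_n-1$ numbers $q_{n-2}+jq_{n-1}$, $1\le j\le a_n-1$); if $a_n=1$, $C_n=(2q_{n-2}+q_{n-1})$. Then the concatenation $C_1,C_2,C_3,\dots$, after deleting repeated values, is exactly the increasing enumeration $\mathfrak x_1=1<\mathfrak x_2<\cdots$ of $\mathfrak X$.
   Context: Let $\alpha$ be an irrational real number in $(0,1)$ with continued fraction expansion $\alpha=[0;a_1,a_2,\dots]$ (the $a_i$ positive integers). Convergents: $p_n/q_n=[0;a_1,\dots,a_n]$ for $n\ge1$, with $p_{-1}=1,q_{-1}=0,p_0=0,q_0=1$, so that $q_n=a_nq_{n-1}+q_{n-2}$ and $p_n=a_np_{n-1}+p_{n-2}$. For real $t\ge1$ define $\psi^{[2]*}_\alpha(t)=\min\{|q\alpha-p| : p,q\in\mathbb Z,\ 1\le q\le t,\ p/q\ne p_n/q_n\text{ for all }n\ge0\}$. Let $\mathfrak X$ be the set consisting of $1$ together with all integers $t\ge2$ such that $\psi^{[2]*}_\alpha(t)<\psi^{[2]*}_\alpha(t-1)$ (the points of discontinuity of $\psi^{[2]*}_\alpha$), enumerated increasingly as $\mathfrak x_1=1<\mathfrak x_2<\cdots$. *)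

theory Defs
  imports Complex_Main "HOL-Library.Stream" "HOL-Library.Infinite_Set"
begin

text \<open>Continued fraction expansion via the Gauss map:
  cf_rem x 0 = x, cf_rem x (n+1) = frac (1 / cf_rem x n);
  the partial quotients are a_n = floor (1 / cf_rem x (n-1)) for n >= 1,
  so that x = [0; a_1, a_2, ...] for irrational x in (0,1).\<close>

fun cf_rem :: "real \<Rightarrow> nat \<Rightarrow> real" where
  "cf_rem x 0 = x"
| "cf_rem x (Suc n) = frac (1 / cf_rem x n)"

definition cf_a :: "real \<Rightarrow> nat \<Rightarrow> nat" where
  "cf_a x n = nat \<lfloor>1 / cf_rem x (n - 1)\<rfloor>"

text \<open>Shifted indexing: cf_qs x k = q_(k-1) and cf_ps x k = p_(k-1),
  so cf_qs x 0 = q_(-1) = 0, cf_qs x 1 = q_0 = 1, cf_ps x 0 = p_(-1) = 1, cf_ps x 1 = p_0 = 0.\<close>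

fun cf_qs :: "real \<Rightarrow> nat \<Rightarrow> nat" where
  "cf_qs x 0 = 0"
| "cf_qs x (Suc 0) = 1"
| "cf_qs x (Suc (Suc n)) = cf_a x (Suc n) * cf_qs x (Suc n) + cf_qs x n"

fun cf_ps :: "real \<Rightarrow> nat \<Rightarrow> nat" where
  "cf_ps x 0 = 1"
| "cf_ps x (Suc 0) = 0"
| "cf_ps x (Suc (Suc n)) = cf_a x (Suc n) * cf_ps x (Suc n) + cf_ps x n"

definition cf_q :: "real \<Rightarrow> nat \<Rightarrow> nat" where "cf_q x n = cf_qs x (Suc n)"
definition cf_p :: "real \<Rightarrow> nat \<Rightarrow> nat" where "cf_p x n = cf_ps x (Suc n)"

definition psi2star :: "real \<Rightarrow> real \<Rightarrow> real" where
  "psi2star \<alpha> t = Inf {\<bar>real_of_int q * \<alpha> - real_of_int p\<bar> | p q :: int.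
      1 \<le> q \<and> real_of_int q \<le> t \<and>
      (\<forall>n. real_of_int p / real_of_int q \<noteq> real (cf_p \<alpha> n) / real (cf_q \<alpha> n))}"

definition frakX :: "real \<Rightarrow> nat set" where
  "frakX \<alpha> = {1} \<union> {t. 2 \<le> t \<and> psi2star \<alpha> (real t) < psi2star \<alpha> (real t - 1)}"

text \<open>The block C_n (n >= 1); q_(n-2) = cf_qs x (n-1), q_(n-1) = cf_qs x n.\<close>
definition block_C :: "real \<Rightarrow> nat \<Rightarrow> nat list" where
  "block_C x n = (if 2 \<le> cf_a x n
     then map (\<lambda>j. cf_qs x (n - 1) + j * cf_qs x n) [1..<cf_a x n]
     else [2 * cf_qs x (n - 1) + cf_qs x n])"

text \<open>The concatenation C_1, C_2, C_3, ... as an infinite sequence (index 0 = first element).\<close>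
definition concat_C :: "real \<Rightarrow> nat \<Rightarrow> nat" where
  "concat_C x k = flat (smap (block_C x) (fromN 1)) !! k"

text \<open>Indices of first occurrences (deleting repeated values keeps first occurrences).\<close>
definition first_occ :: "(nat \<Rightarrow> nat) \<Rightarrow> nat set" where
  "first_occ s = {j. s j \<notin> s ` {..<j}}"

end

theory Submission
  imports Defs
begin


locale cfl =
  fixes \<alpha> :: real
  assumes irr: "\<alpha> \<notin> \<rat>" and pos: "0 < \<alpha>" and lt1: "\<alpha> < 1"
begin

abbreviation "r \<equiv> cf_rem \<alpha>"
abbreviation "a \<equiv> cf_a \<alpha>"
abbreviation "qs \<equiv> cf_qs \<alpha>"
abbreviation "ps \<equiv> cf_ps \<alpha>"

lemma r_props: "0 < r n \<and> r n < 1 \<and> r n \<notin> \<rat>"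
proof (induction n)
  case 0 then show ?case using irr pos lt1 by simp
next
  case (Suc n)
  then have h: "1 / r n \<notin> \<rat>"
    by (metis Rats_inverse inverse_eq_divide inverse_inverse_eq)
  have "frac (1 / r n) \<notin> \<rat>"
  proof
    assume "frac (1 / r n) \<in> \<rat>"
    then have "frac (1 / r n) + of_int \<lfloor>1 / r n\<rfloor> \<in> \<rat>" by simp
    then show False using h by (simp add: frac_def)
  qed
  moreover have "frac (1 / r n) \<noteq> 0" using calculation by (metis Rats_0)
  ultimately show ?case by (simp add: frac_lt_1 order_le_neq_trans[OF frac_ge_0] )
qed

lemma r_pos: "0 < r n" and r_lt1: "r n < 1" and r_irr: "r n \<notin> \<rat>"
  using r_props by auto

lemma a_Suc: "real (a (Suc n)) + r (Suc n) = 1 / r n"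
proof -
  have "1 < 1 / r n" using r_pos[of n] r_lt1[of n] by simp
  then have "0 \<le> \<lfloor>1 / r n\<rfloor>" using r_pos[of n] by simp
  then show ?thesis by (simp add: cf_a_def frac_def)
qed

lemma a_ge1: "1 \<le> a (Suc n)"
proof -
  have "1 < 1 / r n" using r_pos[of n] r_lt1[of n] by simp
  then have "1 \<le> \<lfloor>1 / r n\<rfloor>" by (simp add: le_floor_iff)
  then have "nat 1 \<le> nat \<lfloor>1 / r n\<rfloor>" by (rule nat_mono)
  then show ?thesis by (simp add: cf_a_def)
qed

lemma a_r: "r n * (real (a (Suc n)) + r (Suc n)) = 1"
  using a_Suc[of n] r_pos[of n] by simp

definition D :: "nat \<Rightarrow> real" where "D n = (\<Prod>i<n. r i)"

lemma D_0[simp]: "D 0 = 1" and D_Suc: "D (Suc n) = D n * r n"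
  by (simp_all add: D_def)

lemma D_pos: "0 < D n"
  by (induction n) (simp_all add: D_Suc r_pos)

lemma D_dec: "D (Suc n) < D n"
  using D_pos[of n] r_lt1[of n] r_pos[of n] by (simp add: D_Suc)

lemma D_rec: "D n = real (a (Suc n)) * D (Suc n) + D (Suc (Suc n))"
proof -
  have "D n * (r n * (real (a (Suc n)) + r (Suc n))) = D n" using a_r[of n] by simp
  then show ?thesis by (simp add: D_Suc algebra_simps)
qed

lemma D_antimono: "m \<le> n \<Longrightarrow> D n \<le> D m"
  by (induction n rule: dec_induct) (auto intro: order.trans[OF less_imp_le[OF D_dec]])

lemma D_strict: "m < n \<Longrightarrow> D n < D m"
  by (metis D_antimono D_dec Suc_leI order_le_less_trans)

lemma qs_Suc2: "qs (Suc (Suc n)) = a (Suc n) * qs (Suc n) + qs n" by simp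
lemma ps_Suc2: "ps (Suc (Suc n)) = a (Suc n) * ps (Suc n) + ps n" by simp

lemma X_eq2: "real (qs n) * \<alpha> - real (ps n) = (-1) ^ (Suc n) * D n \<and>
   real (qs (Suc n)) * \<alpha> - real (ps (Suc n)) = (-1) ^ (Suc (Suc n)) * D (Suc n)"
proof (induction n)
  case 0 then show ?case by (simp add: D_Suc)
next
  case (Suc n)
  then have 3: "real (qs n) * \<alpha> - real (ps n) = (-1) ^ (Suc n) * D n"
   "real (qs (Suc n)) * \<alpha> - real (ps (Suc n)) = (-1) ^ (Suc (Suc n)) * D (Suc n)" by auto
  have "real (qs (Suc (Suc n))) * \<alpha> - real (ps (Suc (Suc n))) =
     real (a (Suc n)) * (real (qs (Suc n)) * \<alpha> - real (ps (Suc n))) + (real (qs n) * \<alpha> - real (ps n))"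
    by (simp add: algebra_simps)
  also have "\<dots> = (-1) ^ Suc (Suc (Suc n)) * (D n - real (a (Suc n)) * D (Suc n))"
    using 3 by (simp add: algebra_simps)
  also have "D n - real (a (Suc n)) * D (Suc n) = D (Suc (Suc n))" using D_rec[of n] by simp
  finally show ?case using 3 by simp
qed

lemma X_eq: "real (qs n) * \<alpha> - real (ps n) = (-1) ^ (Suc n) * D n"
  using X_eq2 by blast


lemma qs_mono_Suc: "qs n \<le> qs (Suc n)"
proof (cases n)
  case 0 then show ?thesis by simp
next
  case (Suc m)
  then show ?thesis using a_ge1[of m] by (simp add: trans_le_add1)
qed

lemma qs_mono: "m \<le> n \<Longrightarrow> qs m \<le> qs n"
  by (induction n rule: dec_induct) (auto intro: order.trans[OF _ qs_mono_Suc])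

lemma qs_pos: "1 \<le> qs (Suc n)"
proof (induction n)
  case (Suc n) then show ?case using qs_mono_Suc[of "Suc n"] by linarith
qed simp

lemma det: "int (ps (Suc n)) * int (qs n) - int (ps n) * int (qs (Suc n)) = (-1) ^ Suc n"
proof (induction n)
  case 0 then show ?case by simp
next
  case (Suc n)
  then show ?case by (simp add: algebra_simps)
qed

definition nc :: "int \<Rightarrow> int \<Rightarrow> bool" where
  "nc p q \<longleftrightarrow> (\<forall>n. real_of_int p / real_of_int q \<noteq> real (cf_p \<alpha> n) / real (cf_q \<alpha> n))"

lemma coprime_pq: "coprime (int (ps (Suc k))) (int (qs (Suc k)))"
proof -
  have "int (ps (Suc (Suc k))) * int (qs (Suc k)) - int (ps (Suc k)) * int (qs (Suc (Suc k))) = (-1) ^ Suc (Suc k)"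
    using det[of "Suc k"] .
  then have u: "is_unit (int (ps (Suc (Suc k))) * int (qs (Suc k)) - int (ps (Suc k)) * int (qs (Suc (Suc k))))"
    by simp
  have "gcd (int (ps (Suc k))) (int (qs (Suc k))) dvd
     (int (ps (Suc (Suc k))) * int (qs (Suc k)) - int (ps (Suc k)) * int (qs (Suc (Suc k))))"
    by (intro dvd_diff dvd_mult dvd_mult2) auto
  then have "is_unit (gcd (int (ps (Suc k))) (int (qs (Suc k))))"
    using u dvd_unit_imp_unit by blast
  then show ?thesis using is_unit_gcd by blast
qed

lemma conv_mult:
  fixes p q :: int
  assumes q: "1 \<le> q" and eq: "real_of_int p / real_of_int q = real (ps (Suc k)) / real (qs (Suc k))"
  shows "\<exists>c::int. 1 \<le> c \<and> q = c * int (qs (Suc k)) \<and> p = c * int (ps (Suc k))"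
proof -
  have qk: "1 \<le> qs (Suc k)" by (rule qs_pos)
  from eq q qk have "real_of_int p * real (qs (Suc k)) = real (ps (Suc k)) * real_of_int q"
    by (simp add: field_simps)
  then have e: "p * int (qs (Suc k)) = int (ps (Suc k)) * q"
    by (metis of_int_eq_iff of_int_mult of_int_of_nat_eq)
  then have "int (qs (Suc k)) dvd int (ps (Suc k)) * q" by (metis dvd_triv_right)
  then have "int (qs (Suc k)) dvd q" using coprime_pq[of k]
    using coprime_dvd_mult_right_iff coprime_commute by blast
  then obtain c where c: "q = int (qs (Suc k)) * c" by (auto elim: dvdE)
  have "c \<ge> 1"
  proof (rule ccontr)
    assume "\<not> 1 \<le> c" then have "c \<le> 0" by simp
    then have "int (qs (Suc k)) * c \<le> 0" using qk by (simp add: mult_nonneg_nonpos)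
    then show False using c q by simp
  qed
  moreover have "p = c * int (ps (Suc k))"
    using e c qk by (simp add: algebra_simps)
  ultimately show ?thesis using c by (auto simp: algebra_simps)
qed

lemma conv_val:
  fixes p q :: int
  assumes q: "1 \<le> q" and nnc: "\<not> nc p q"
  shows "\<exists>k c. 1 \<le> c \<and> q = c * int (qs (Suc k)) \<and> \<bar>real_of_int q * \<alpha> - real_of_int p\<bar> = real_of_int c * D (Suc k)"
proof -
  from nnc obtain k where "real_of_int p / real_of_int q = real (ps (Suc k)) / real (qs (Suc k))"
    by (auto simp: nc_def cf_p_def cf_q_def)
  from conv_mult[OF q this] obtain c where c: "1 \<le> c" "q = c * int (qs (Suc k))" "p = c * int (ps (Suc k))"
    by blast
  have "real_of_int q * \<alpha> - real_of_int p = real_of_int c * (real (qs (Suc k)) * \<alpha> - real (ps (Suc k)))"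
    using c by (simp add: algebra_simps)
  also have "\<dots> = real_of_int c * ((-1) ^ Suc (Suc k) * D (Suc k))" by (simp add: X_eq)
  finally have "\<bar>real_of_int q * \<alpha> - real_of_int p\<bar> = real_of_int c * D (Suc k)"
    using c(1) D_pos[of "Suc k"] by (simp add: abs_mult)
  then show ?thesis using c by blast
qed

lemma no_int_between:
  fixes c :: int and x y :: real
  assumes "0 < y" "y < x" "y = real_of_int c * x"
  shows False
proof -
  have "0 < real_of_int c * x" "real_of_int c * x < 1 * x" using assms by auto
  then have "0 < real_of_int c" "real_of_int c < 1" using assms
    by (auto simp: zero_less_mult_iff mult_less_cancel_right)
  then have "0 < c" "c < 1" by simp_all
  then show False by simp
qed

lemma val_lin: "real (s * qs m + t * qs (Suc m)) * \<alpha> - real (s * ps m + t * ps (Suc m))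
   = (-1) ^ Suc m * (real s * D m - real t * D (Suc m))"
proof -
  have "real (s * qs m + t * qs (Suc m)) * \<alpha> - real (s * ps m + t * ps (Suc m))
     = real s * (real (qs m) * \<alpha> - real (ps m)) + real t * (real (qs (Suc m)) * \<alpha> - real (ps (Suc m)))"
    by (simp add: algebra_simps)
  also have "\<dots> = (-1) ^ Suc m * (real s * D m - real t * D (Suc m))"
    by (simp only: X_eq) (simp add: algebra_simps)
  finally show ?thesis .
qed

lemma val_abs:
  assumes "real t * D (Suc m) \<le> real s * D m"
  shows "\<bar>real_of_int (int (s * qs m + t * qs (Suc m))) * \<alpha> - real_of_int (int (s * ps m + t * ps (Suc m)))\<bar>
     = real s * D m - real t * D (Suc m)"
  using val_lin[of s m t] assms by (simp add: abs_mult)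

lemma D_rec': "D (Suc (Suc m)) = D m - real (a (Suc m)) * D (Suc m)"
  using D_rec[of m] by simp

lemma W1:
  assumes j1: "1 \<le> j" and ja: "j < a (Suc m)"
  shows "nc (int (1 * ps m + j * ps (Suc m))) (int (1 * qs m + j * qs (Suc m)))"
proof (rule ccontr)
  let ?p = "int (1 * ps m + j * ps (Suc m))" and ?q = "int (1 * qs m + j * qs (Suc m))"
  let ?V = "D m - real j * D (Suc m)"
  assume nn: "\<not> nc ?p ?q"
  have "1*1 \<le> j * qs (Suc m)" by (rule mult_le_mono[OF j1 qs_pos])
  then have q1: "1 \<le> ?q" by linarith
  have Dr: "D m = real (a (Suc m)) * D (Suc m) + D (Suc (Suc m))" by (rule D_rec)
  have "real j * D (Suc m) \<le> real (a (Suc m)) * D (Suc m)"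
    using ja D_pos[of "Suc m"] by (intro mult_right_mono) auto
  then have le: "real j * D (Suc m) \<le> real 1 * D m" using Dr D_pos[of "Suc (Suc m)"] by simp
  have V: "\<bar>real_of_int ?q * \<alpha> - real_of_int ?p\<bar> = ?V"
    using val_abs[OF le] by simp
  from conv_val[OF q1 nn] obtain k c where kc: "1 \<le> c" "?q = c * int (qs (Suc k))"
    "\<bar>real_of_int ?q * \<alpha> - real_of_int ?p\<bar> = real_of_int c * D (Suc k)" by blast
  have cV: "real_of_int c * D (Suc k) = ?V" using kc V by simp
  have Vlt: "?V < D m" using j1 D_pos[of "Suc m"] by simp
  consider "Suc k \<le> m" | "Suc k = Suc m" | "Suc (Suc m) \<le> Suc k" by linarith
  then show False
  proof cases
    case 1
    then have "D m \<le> D (Suc k)" by (rule D_antimono)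
    also have "D (Suc k) \<le> real_of_int c * D (Suc k)" using kc(1) D_pos[of "Suc k"] by simp
    finally show False using cV Vlt by simp
  next
    case 2
    then have "real_of_int c * D (Suc m) = ?V" using cV by simp
    then have "D (Suc (Suc m)) = real_of_int (c + int j - int (a (Suc m))) * D (Suc m)"
      using D_rec'[of m] by (simp add: algebra_simps)
    then show False using no_int_between D_pos D_dec by blast
  next
    case 3
    have "qs (Suc (Suc m)) \<le> qs (Suc k)" using 3 by (rule qs_mono)
    moreover have "qs m + j * qs (Suc m) < qs (Suc (Suc m))"
    proof -
      have "j * qs (Suc m) < a (Suc m) * qs (Suc m)" using ja qs_pos[of m] by simp
      then show ?thesis by simp
    qed
    moreover have "1 * int (qs (Suc k)) \<le> c * int (qs (Suc k))" using kc(1) by (intro mult_right_mono) auto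
    ultimately show False using kc(2) by linarith
  qed
qed

lemma W1_val:
  assumes j1: "1 \<le> j" and ja: "j < a (Suc m)"
  shows "\<bar>real_of_int (int (1 * qs m + j * qs (Suc m))) * \<alpha> - real_of_int (int (1 * ps m + j * ps (Suc m)))\<bar>
     = D m - real j * D (Suc m)"
proof -
  have Dr: "D m = real (a (Suc m)) * D (Suc m) + D (Suc (Suc m))" by (rule D_rec)
  have "real j * D (Suc m) \<le> real (a (Suc m)) * D (Suc m)"
    using ja D_pos[of "Suc m"] by (intro mult_right_mono) auto
  then have le: "real j * D (Suc m) \<le> real 1 * D m" using Dr D_pos[of "Suc (Suc m)"] by simp
  show ?thesis using val_abs[OF le] by simp
qed

lemma W2_val:
  assumes a1: "a (Suc m) = 1"
  shows "\<bar>real_of_int (int (2 * qs m + 1 * qs (Suc m))) * \<alpha> - real_of_int (int (2 * ps m + 1 * ps (Suc m)))\<bar>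
     = 2 * D m - D (Suc m)"
proof -
  have le: "real 1 * D (Suc m) \<le> real 2 * D m" using D_dec[of m] D_pos[of m] by simp
  show ?thesis using val_abs[OF le] by simp
qed

lemma W2:
  assumes a1: "a (Suc m) = 1"
  shows "nc (int (2 * ps m + 1 * ps (Suc m))) (int (2 * qs m + 1 * qs (Suc m)))"
proof (rule ccontr)
  let ?p = "int (2 * ps m + 1 * ps (Suc m))" and ?q = "int (2 * qs m + 1 * qs (Suc m))"
  let ?V = "2 * D m - D (Suc m)"
  assume nn: "\<not> nc ?p ?q"
  have q1: "1 \<le> ?q" using qs_pos[of m] by linarith
  have Dr: "D m = D (Suc m) + D (Suc (Suc m))" using D_rec[of m] a1 by simp
  from conv_val[OF q1 nn] obtain k c where kc: "1 \<le> c" "?q = c * int (qs (Suc k))"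
    "\<bar>real_of_int ?q * \<alpha> - real_of_int ?p\<bar> = real_of_int c * D (Suc k)" by blast
  have cV: "real_of_int c * D (Suc k) = ?V" using kc W2_val[OF a1] by simp
  have cD: "D (Suc k) \<le> real_of_int c * D (Suc k)" using kc(1) D_pos[of "Suc k"] by simp
  consider "Suc (Suc k) \<le> m" | "Suc k = m" | "Suc k = Suc m" | "Suc (Suc m) \<le> Suc k" by linarith
  then show False
  proof cases
    case 1
    then obtain m' where m': "m = Suc m'" "Suc k \<le> m'" by (cases m) auto
    have "D m' \<le> D (Suc k)" using m'(2) by (rule D_antimono)
    moreover have "D m' = real (a (Suc m')) * D (Suc m') + D (Suc (Suc m'))" by (rule D_rec)
    moreover have "D (Suc m') \<le> real (a (Suc m')) * D (Suc m')" using a_ge1[of m'] D_pos[of "Suc m'"] by simp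
    moreover have "D (Suc (Suc m)) < D (Suc m)" by (rule D_dec)
    ultimately show False using cV cD m'(1) Dr by simp
  next
    case 2
    then have "D (Suc (Suc m)) = real_of_int (c - 1) * D m" using cV Dr by (simp add: algebra_simps)
    moreover have "0 < D (Suc (Suc m))" "D (Suc (Suc m)) < D m" using D_pos D_strict[of m "Suc (Suc m)"] by auto
    ultimately show False using no_int_between[of "D (Suc (Suc m))" "D m" "c - 1"] by simp
  next
    case 3
    then have "real_of_int c * D (Suc m) = D (Suc m) + 2 * D (Suc (Suc m))" using cV Dr by simp
    then have "real_of_int c * D (Suc m) = D (Suc m) * (1 + 2 * r (Suc m))" by (simp add: D_Suc algebra_simps)
    then have "real_of_int c = 1 + 2 * r (Suc m)" using D_pos[of "Suc m"] by simp
    then have "r (Suc m) = (real_of_int c - 1) / 2" by simp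
    moreover have "(real_of_int c - 1) / 2 \<in> \<rat>" by simp
    ultimately show False using r_irr[of "Suc m"] by metis
  next
    case 4
    have qsm: "qs (Suc (Suc m)) = qs (Suc m) + qs m" using a1 by simp
    have qk: "qs (Suc (Suc m)) \<le> qs (Suc k)" using 4 by (rule qs_mono)
    show False
    proof (cases "c = 1")
      case True
      then have "D (Suc k) = ?V" using cV by simp
      moreover have "D (Suc k) \<le> D (Suc (Suc m))" using 4 by (rule D_antimono)
      ultimately show False using Dr D_pos[of m] D_dec[of m] by simp
    next
      case False
      then have "2 \<le> c" using kc(1) by simp
      then have "2 * int (qs (Suc k)) \<le> c * int (qs (Suc k))" by (intro mult_right_mono) auto
      then show False using kc(2) qk qsm qs_pos[of m] by linarith
    qed
  qed
qed

end

context cfl begin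

lemma decomp:
  "1 \<le> s \<Longrightarrow> 1 \<le> t \<Longrightarrow> \<exists>m s' t'. 1 \<le> s' \<and> 1 \<le> t' \<and> t' \<le> a (Suc m) * s' \<and>
     s * ps n + t * ps (Suc n) = s' * ps m + t' * ps (Suc m) \<and>
     s * qs n + t * qs (Suc n) = s' * qs m + t' * qs (Suc m)"
proof (induction "s + t" arbitrary: s t n rule: less_induct)
  case less
  show ?case
  proof (cases "t \<le> a (Suc n) * s")
    case True then show ?thesis using less.prems by blast
  next
    case False
    have a1: "1 \<le> a (Suc n)" by (rule a_ge1)
    then have "1 * 1 \<le> a (Suc n) * s" using less.prems(1) by (intro mult_le_mono)
    then have lt: "(t - a (Suc n) * s) + s < s + t" using False by linarith
    have p1: "1 \<le> t - a (Suc n) * s" using False by simp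
    from less.hyps[OF lt p1 less.prems(1), of "Suc n"] obtain m s' t' where
      h: "1 \<le> s'" "1 \<le> t'" "t' \<le> a (Suc m) * s'"
      "(t - a (Suc n) * s) * ps (Suc n) + s * ps (Suc (Suc n)) = s' * ps m + t' * ps (Suc m)"
      "(t - a (Suc n) * s) * qs (Suc n) + s * qs (Suc (Suc n)) = s' * qs m + t' * qs (Suc m)"
      by blast
    have e1: "(t - a (Suc n) * s) * ps (Suc n) + s * ps (Suc (Suc n)) = s * ps n + t * ps (Suc n)"
      using False by (simp add: algebra_simps diff_mult_distrib)
    have e2: "(t - a (Suc n) * s) * qs (Suc n) + s * qs (Suc (Suc n)) = s * qs n + t * qs (Suc n)"
      using False by (simp add: algebra_simps diff_mult_distrib)
    show ?thesis using h e1 e2 by metis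
  qed
qed

definition L :: "nat \<Rightarrow> nat" where
  "L m = (if 2 \<le> a (Suc m) then a (Suc m) - 1 else 1)"
definition qb :: "nat \<Rightarrow> nat \<Rightarrow> nat" where
  "qb m i = (if 2 \<le> a (Suc m) then qs m + Suc i * qs (Suc m) else 2 * qs m + qs (Suc m))"
definition wb :: "nat \<Rightarrow> nat \<Rightarrow> real" where
  "wb m i = (if 2 \<le> a (Suc m) then D m - real (Suc i) * D (Suc m) else 2 * D m - D (Suc m))"

lemma L_pos: "1 \<le> L m" by (simp add: L_def le_diff_conv2)

lemma lev_lb:
  assumes s1: "1 \<le> s" and t1: "1 \<le> t" and ta: "t < a (Suc m) * s"
  shows "\<exists>i < L m. qb m i \<le> s * qs m + t * qs (Suc m) \<and> wb m i \<le> real s * D m - real t * D (Suc m)"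
proof -
  let ?a = "a (Suc m)"
  have Dr: "D m = real ?a * D (Suc m) + D (Suc (Suc m))" by (rule D_rec)
  have val: "real s * D m - real t * D (Suc m) = (real ?a * real s - real t) * D (Suc m) + real s * D (Suc (Suc m))"
    using Dr by (simp add: algebra_simps)
  have u1: "1 \<le> real ?a * real s - real t"
  proof -
    have "t + 1 \<le> ?a * s" using ta by simp
    then have "real t + 1 \<le> real (?a * s)" by linarith
    then show ?thesis by simp
  qed
  have Dp1: "0 < D (Suc m)" and Dp2: "0 < D (Suc (Suc m))" using D_pos by auto
  show ?thesis
  proof (cases "2 \<le> ?a")
    case True
    define j where "j = min t (?a - 1)"
    have j1: "1 \<le> j" "j \<le> t" "j \<le> ?a - 1" using t1 True by (auto simp: j_def)
    have iL: "j - 1 < L m" using j1 True by (simp add: L_def)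
    have "qb m (j - 1) = qs m + j * qs (Suc m)" using True j1 by (simp add: qb_def)
    also have "\<dots> \<le> s * qs m + t * qs (Suc m)"
      using s1 j1 by (intro add_mono mult_le_mono) auto
    finally have qle: "qb m (j - 1) \<le> s * qs m + t * qs (Suc m)" .
    have "wb m (j - 1) = D m - real j * D (Suc m)" using True j1 by (simp add: qb_def wb_def)
    also have "\<dots> = (real ?a - real j) * D (Suc m) + D (Suc (Suc m))"
      using Dr by (simp add: algebra_simps)
    also have "\<dots> \<le> (real ?a * real s - real t) * D (Suc m) + real s * D (Suc (Suc m))"
    proof (cases "j = t")
      case True
      have "real ?a * 1 \<le> real ?a * real s" using s1 by (intro mult_left_mono) auto
      then have "(real ?a - real j) * D (Suc m) \<le> (real ?a * real s - real t) * D (Suc m)"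
        using True Dp1 by (intro mult_right_mono) auto
      moreover have "1 * D (Suc (Suc m)) \<le> real s * D (Suc (Suc m))" using s1 Dp2 by (intro mult_right_mono) auto
      ultimately show ?thesis by simp
    next
      case False
      then have "j = ?a - 1" by (simp add: j_def min_def split: if_splits)
      then have "real ?a - real j = 1" using True by simp
      moreover have "1 * D (Suc m) \<le> (real ?a * real s - real t) * D (Suc m)" using u1 Dp1 by (intro mult_right_mono) auto
      moreover have "1 * D (Suc (Suc m)) \<le> real s * D (Suc (Suc m))" using s1 Dp2 by (intro mult_right_mono) auto
      ultimately show ?thesis by simp
    qed
    finally show ?thesis using iL qle val by auto
  next
    case False
    then have a1: "?a = 1" using a_ge1[of m] by simp
    then have ts: "t < s" using ta by simp
    then have s2: "2 \<le> s" using t1 by simp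
    have iL: "0 < L m" by (simp add: L_def)
    have "qb m 0 = 2 * qs m + 1 * qs (Suc m)" using a1 by (simp add: qb_def)
    also have "\<dots> \<le> s * qs m + t * qs (Suc m)"
      using s2 t1 by (intro add_mono mult_le_mono) auto
    finally have qle: "qb m 0 \<le> s * qs m + t * qs (Suc m)" .
    have "wb m 0 = 1 * D (Suc m) + 2 * D (Suc (Suc m))" using a1 Dr by (simp add: wb_def)
    also have "\<dots> \<le> (real ?a * real s - real t) * D (Suc m) + real s * D (Suc (Suc m))"
      using u1 s2 Dp1 Dp2 by (intro add_mono mult_right_mono) auto
    finally show ?thesis using iL qle val by auto
  qed
qed

lemma witness:
  assumes "i < L m"
  shows "\<exists>p. nc p (int (qb m i)) \<and> \<bar>real (qb m i) * \<alpha> - real_of_int p\<bar> = wb m i"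
proof (cases "2 \<le> a (Suc m)")
  case True
  then have j: "1 \<le> Suc i" "Suc i < a (Suc m)" using assms by (auto simp: L_def)
  have "qb m i = 1 * qs m + Suc i * qs (Suc m)" using True by (simp add: qb_def)
  moreover have "wb m i = D m - real (Suc i) * D (Suc m)" using True by (simp add: wb_def)
  ultimately show ?thesis using W1[OF j] W1_val[OF j]
    by (intro exI[of _ "int (1 * ps m + Suc i * ps (Suc m))"]) simp
next
  case False
  then have a1: "a (Suc m) = 1" using a_ge1[of m] by simp
  have "qb m i = 2 * qs m + 1 * qs (Suc m)" using a1 by (simp add: qb_def)
  moreover have "wb m i = 2 * D m - D (Suc m)" using a1 by (simp add: wb_def)
  ultimately show ?thesis using W2[OF a1] W2_val[OF a1]
    by (intro exI[of _ "int (2 * ps m + 1 * ps (Suc m))"]) simp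
qed

lemma qb00: "qb 0 0 = 1" by (simp add: qb_def)

lemma wb00: "wb 0 0 \<le> 1 + \<alpha>"
proof -
  have D1: "D 1 = \<alpha>" by (simp add: D_def)
  have Dr: "1 = real (a 1) * \<alpha> + D 2" using D_rec[of 0] D1 by (simp add: numeral_2_eq_2)
  have "D 2 < D 1" using D_dec[of 1] by (simp add: numeral_2_eq_2)
  show ?thesis
  proof (cases "2 \<le> a 1")
    case True then show ?thesis using D1 pos by (simp add: wb_def)
  next
    case False
    then have "a 1 = 1" using a_ge1[of 0] by simp
    then show ?thesis using D1 Dr \<open>D 2 < D 1\<close> by (simp add: wb_def)
  qed
qed

lemma LB:
  fixes p q :: int
  assumes q1: "1 \<le> q" and ncpq: "nc p q"
  shows "\<exists>m i. i < L m \<and> int (qb m i) \<le> q \<and> wb m i \<le> \<bar>real_of_int q * \<alpha> - real_of_int p\<bar>"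
proof -
  consider "p \<le> -1" | "p = 0" | "1 \<le> p" by linarith
  then show ?thesis
  proof cases
    case 1
    have "1 + \<alpha> \<le> real_of_int q * \<alpha> - real_of_int p"
    proof -
      have "1 * \<alpha> \<le> real_of_int q * \<alpha>" using q1 pos by (intro mult_right_mono) auto
      moreover have "1 \<le> - real_of_int p" using 1 by simp
      ultimately show ?thesis by simp
    qed
    then have "wb 0 0 \<le> \<bar>real_of_int q * \<alpha> - real_of_int p\<bar>" using wb00 by simp
    moreover have "0 < L 0" using L_pos[of 0] by simp
    ultimately show ?thesis using qb00 q1 by (intro exI[of _ 0]) simp
  next
    case 2
    then have False using ncpq by (auto simp: nc_def cf_p_def cf_q_def dest: spec[of _ 0])
    then show ?thesis ..
  next
    case 3
    define s where "s = nat p"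
    define t where "t = nat q"
    have st: "p = int s" "q = int t" "1 \<le> s" "1 \<le> t" using 3 q1 by (auto simp: s_def t_def)
    from decomp[OF st(3,4), of 0] obtain m s' t' where
      h: "1 \<le> s'" "1 \<le> t'" "t' \<le> a (Suc m) * s'"
      "s = s' * ps m + t' * ps (Suc m)" "t = s' * qs m + t' * qs (Suc m)"
      by auto
    have lt: "t' < a (Suc m) * s'"
    proof (rule ccontr)
      assume "\<not> t' < a (Suc m) * s'"
      then have te: "t' = a (Suc m) * s'" using h(3) by simp
      have "s = s' * ps (Suc (Suc m))" using h(4) te by (simp add: algebra_simps)
      moreover have "t = s' * qs (Suc (Suc m))" using h(5) te by (simp add: algebra_simps)
      ultimately have "real_of_int p / real_of_int q = real (cf_p \<alpha> (Suc m)) / real (cf_q \<alpha> (Suc m))"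
        using st h(1) by (simp add: cf_p_def cf_q_def)
      then show False using ncpq by (auto simp: nc_def)
    qed
    have le: "real t' * D (Suc m) \<le> real s' * D m"
    proof -
      have "real t' * D (Suc m) \<le> real (a (Suc m) * s') * D (Suc m)"
        using h(3) D_pos[of "Suc m"] by (intro mult_right_mono) (simp only: of_nat_le_iff, simp)
      also have "\<dots> = real s' * (real (a (Suc m)) * D (Suc m))" by simp
      also have "\<dots> \<le> real s' * D m" using D_rec[of m] D_pos[of "Suc (Suc m)"] by (intro mult_left_mono) auto
      finally show ?thesis .
    qed
    have v: "\<bar>real_of_int q * \<alpha> - real_of_int p\<bar> = real s' * D m - real t' * D (Suc m)"
      using val_abs[OF le] st h by simp
    from lev_lb[OF h(1,2) lt] obtain i where "i < L m" "qb m i \<le> t" "wb m i \<le> real s' * D m - real t' * D (Suc m)"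
      using h(5) by auto
    then show ?thesis using v st by auto
  qed
qed

end


lemma flat_pos:
  assumes ne: "\<forall>j. f j \<noteq> []"
  shows "i < length (f (N + n)) \<Longrightarrow>
    flat (smap f (fromN N)) !! ((\<Sum>j<n. length (f (N + j))) + i) = f (N + n) ! i"
proof (induction n arbitrary: N)
  case 0
  have "\<forall>xs \<in> sset (smap f (fromN N)). xs \<noteq> []" using ne by (auto simp: stream.set_map)
  then show ?case using 0 by (simp add: flat_snth)
next
  case (Suc n)
  have s: "\<forall>xs \<in> sset (smap f (fromN N)). xs \<noteq> []" using ne by (auto simp: stream.set_map)
  have IH: "flat (smap f (fromN (Suc N))) !! ((\<Sum>j<n. length (f (Suc N + j))) + i) = f (Suc N + n) ! i"
    using Suc.IH[of "Suc N"] Suc.prems by simp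
  have sum: "(\<Sum>j<Suc n. length (f (N + j))) = length (f N) + (\<Sum>j<n. length (f (Suc N + j)))"
    by (subst sum.lessThan_Suc_shift) simp
  have sh: "flat (smap f (fromN N)) !! (length (f N) + X) = flat (smap f (fromN (Suc N))) !! X" for X
    using s by (simp add: flat_snth)
  have "flat (smap f (fromN N)) !! ((\<Sum>j<Suc n. length (f (N + j))) + i)
      = flat (smap f (fromN N)) !! (length (f N) + ((\<Sum>j<n. length (f (Suc N + j))) + i))"
    by (simp only: sum add.assoc)
  also have "\<dots> = flat (smap f (fromN (Suc N))) !! ((\<Sum>j<n. length (f (Suc N + j))) + i)" by (rule sh)
  also have "\<dots> = f (Suc N + n) ! i" by (rule IH)
  finally show ?case by simp
qed

context cfl begin

definition S :: "nat \<Rightarrow> nat" where "S n = (\<Sum>j<n. L j)"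
definition wblock :: "nat \<Rightarrow> real list" where "wblock m = map (wb m) [0..<L m]"
definition wv :: "nat \<Rightarrow> real" where "wv k = flat (smap wblock (fromN 0)) !! k"

lemma block_len: "length (block_C \<alpha> (Suc m)) = L m"
  by (simp add: block_C_def L_def)

lemma block_nth: "i < L m \<Longrightarrow> block_C \<alpha> (Suc m) ! i = qb m i"
  by (auto simp: block_C_def L_def qb_def)

lemma pos_c: "i < L n \<Longrightarrow> concat_C \<alpha> (S n + i) = qb n i"
proof -
  assume i: "i < L n"
  have ne: "\<forall>j. block_C \<alpha> j \<noteq> []"
  proof
    fix j show "block_C \<alpha> j \<noteq> []" by (simp add: block_C_def)
  qed
  have "flat (smap (block_C \<alpha>) (fromN 1)) !! ((\<Sum>j<n. length (block_C \<alpha> (1 + j))) + i) = block_C \<alpha> (1 + n) ! i"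
    using flat_pos[OF ne, of i 1 n] i by (simp add: block_len)
  then show ?thesis using i by (simp add: concat_C_def S_def block_len block_nth)
qed

lemma wlen: "length (wblock m) = L m" by (simp add: wblock_def)

lemma pos_w: "i < L n \<Longrightarrow> wv (S n + i) = wb n i"
proof -
  assume i: "i < L n"
  have ne: "\<forall>j. wblock j \<noteq> []"
  proof
    fix j show "wblock j \<noteq> []" using L_pos[of j] by (simp add: wblock_def)
  qed
  have "flat (smap wblock (fromN 0)) !! ((\<Sum>j<n. length (wblock (0 + j))) + i) = wblock (0 + n) ! i"
    using flat_pos[OF ne, of i 0 n] i by (simp add: wlen)
  moreover have "(\<Sum>j<n. length (wblock (0 + j))) = S n" by (simp add: S_def wlen)
  moreover have "wblock (0 + n) ! i = wb n i" using i by (simp add: wblock_def)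
  ultimately show ?thesis by (simp add: wv_def)
qed

lemma idx_decomp: "\<exists>n i. i < L n \<and> k = S n + i"
proof (induction k)
  case 0 then show ?case using L_pos[of 0] by (intro exI[of _ 0]) (simp add: S_def)
next
  case (Suc k)
  then obtain n i where ni: "i < L n" "k = S n + i" by blast
  show ?case
  proof (cases "Suc i < L n")
    case True then show ?thesis using ni by (intro exI[of _ n] exI[of _ "Suc i"]) simp
  next
    case False
    then have "Suc k = S (Suc n) + 0" using ni by (simp add: S_def)
    then show ?thesis using L_pos[of "Suc n"] by (intro exI[of _ "Suc n"] exI[of _ 0]) simp
  qed
qed

lemma within:
  assumes "Suc i < L n"
  shows "qb n i < qb n (Suc i) \<and> wb n (Suc i) < wb n i"
proof -
  have a2: "2 \<le> a (Suc n)" using assms by (simp add: L_def split: if_splits)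
  show ?thesis using a2 qs_pos[of n] D_pos[of "Suc n"] by (simp add: qb_def wb_def algebra_simps)
qed

lemma across: "qb n (L n - 1) \<le> qb (Suc n) 0 \<and> wb (Suc n) 0 < wb n (L n - 1)"
proof -
  let ?a = "a (Suc n)" and ?b = "a (Suc (Suc n))"
  have qrec: "qs (Suc (Suc n)) = ?a * qs (Suc n) + qs n" by simp
  have D1: "D n = real ?a * D (Suc n) + D (Suc (Suc n))" by (rule D_rec)
  have D2: "D (Suc n) = real ?b * D (Suc (Suc n)) + D (Suc (Suc (Suc n)))" by (rule D_rec)
  have d1: "D (Suc (Suc n)) < D (Suc n)" and d2: "D (Suc (Suc (Suc n))) < D (Suc (Suc n))"
    and p3: "0 < D (Suc (Suc (Suc n)))" and p2: "0 < D (Suc (Suc n))" using D_dec D_pos by auto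
  have qm: "qs n \<le> qs (Suc n)" by (rule qs_mono_Suc)
  have qp: "1 \<le> qs (Suc n)" by (rule qs_pos)
  have wb1: "wb (Suc n) 0 \<le> D (Suc n) + D (Suc (Suc (Suc n))) \<and> wb (Suc n) 0 < D (Suc n)+ D (Suc (Suc n))"
  proof (cases "2 \<le> ?b")
    case True then show ?thesis using p2 p3 by (simp add: wb_def)
  next
    case False then have "?b = 1" using a_ge1[of "Suc n"] by simp
    then show ?thesis using D2 d2 by (simp add: wb_def)
  qed
  have qb1: "qs (Suc n) + qs (Suc (Suc n)) \<le> qb (Suc n) 0"
    by (simp add: qb_def)
  show ?thesis
  proof (cases "2 \<le> ?a")
    case True
    have L: "L n - 1 = ?a - 2" using True by (simp add: L_def)
    have e: "Suc (?a - 2) = ?a - 1" using True by simp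
    have r: "real (?a - 1) = real ?a - 1" using True by (simp add: of_nat_diff)
    have q1: "qb n (L n - 1) = qs n + (?a - 1) * qs (Suc n)" using True L e by (simp add: qb_def)
    have q2: "(?a - 1) * qs (Suc n) \<le> ?a * qs (Suc n)" by simp
    have w1: "wb n (L n - 1) = D n - real (?a - 1) * D (Suc n)" using True L e by (simp add: wb_def)
    have w2: "D n - real (?a - 1) * D (Suc n) = D (Suc n) + D (Suc (Suc n))"
      unfolding r D1 by (simp add: algebra_simps)
    show ?thesis using q1 q2 w1 w2 qb1 qrec wb1 by linarith
  next
    case False
    then have a1: "?a = 1" using a_ge1[of n] by simp
    have L: "L n - 1 = 0" using a1 by (simp add: L_def)
    have q1: "qb n (L n - 1) = 2 * qs n + qs (Suc n)" using a1 L by (simp add: qb_def)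
    have w1: "wb n (L n - 1) = 2 * D n - D (Suc n)" using a1 L by (simp add: wb_def)
    have D1': "D n = D (Suc n) + D (Suc (Suc n))" using D1 a1 by simp
    have "qs (Suc (Suc n)) = qs (Suc n) + qs n" using a1 by simp
    then have c1: "qb n (L n - 1) \<le> qb (Suc n) 0" using q1 qb1 qm by linarith
    have c2: "wb (Suc n) 0 < wb n (L n - 1)" using w1 D1' wb1 p2 by linarith
    show ?thesis using c1 c2 by simp
  qed
qed

lemma step_cw: "concat_C \<alpha> k \<le> concat_C \<alpha> (Suc k) \<and> wv (Suc k) < wv k"
proof -
  obtain n i where ni: "i < L n" "k = S n + i" using idx_decomp by blast
  show ?thesis
  proof (cases "Suc i < L n")
    case True
    have "Suc k = S n + Suc i" using ni by simp
    then show ?thesis using ni within[OF True] pos_c[OF True] pos_w[OF True] pos_c[OF ni(1)] pos_w[OF ni(1)]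
      by simp
  next
    case False
    then have i: "i = L n - 1" using ni by simp
    have "Suc k = S (Suc n) + 0" using ni False by (simp add: S_def)
    then show ?thesis using ni i across[of n] pos_c[of i n] pos_w[of i n] pos_c[of 0 "Suc n"] pos_w[of 0 "Suc n"]
      L_pos[of "Suc n"] by simp
  qed
qed

lemma c_mono: "k \<le> l \<Longrightarrow> concat_C \<alpha> k \<le> concat_C \<alpha> l"
proof -
  assume kl: "k \<le> l"
  have "\<And>n. concat_C \<alpha> n \<le> concat_C \<alpha> (Suc n)" using step_cw by blast
  then show ?thesis using kl by (rule lift_Suc_mono_le)
qed

lemma wv_strict: "k < l \<Longrightarrow> wv l < wv k"
proof -
  assume "k < l"
  have "\<And>n. (\<lambda>k. - wv k) n < (\<lambda>k. - wv k) (Suc n)" using step_cw by simp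
  then have "(\<lambda>k. - wv k) k < (\<lambda>k. - wv k) l"
    using \<open>k < l\<close> by (rule lift_Suc_mono_less)
  then show ?thesis by simp
qed

lemma c0: "concat_C \<alpha> 0 = 1"
  using pos_c[of 0 0] L_pos[of 0] qb00 by (simp add: S_def)

lemma c_ge1: "1 \<le> concat_C \<alpha> k"
  using c_mono[of 0 k] c0 by simp

lemma qs_big: "n + 1 \<le> qs (Suc (2 * n))"
proof (induction n)
  case (Suc n)
  have "Suc (2 * Suc n) = Suc (Suc (Suc (2 * n)))" by simp
  then have "qs (Suc (2 * Suc n)) = a (Suc (Suc (2*n))) * qs (Suc (Suc (2*n))) + qs (Suc (2*n))"
    using qs_Suc2[of "Suc (2*n)"] by simp
  moreover have "1 * 1 \<le> a (Suc (Suc (2*n))) * qs (Suc (Suc (2*n)))"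
    by (rule mult_le_mono[OF a_ge1 qs_pos])
  ultimately show ?case using Suc by linarith
qed simp

lemma c_big: "n + 1 \<le> concat_C \<alpha> (S (2 * n))"
proof -
  have "0 < L (2 * n)" using L_pos[of "2*n"] by linarith
  then have "concat_C \<alpha> (S (2 * n)) = qb (2 * n) 0" using pos_c[of 0 "2*n"] by simp
  moreover have "qs (Suc (2 * n)) \<le> qb (2 * n) 0" by (simp add: qb_def)
  ultimately show ?thesis using qs_big[of n] by linarith
qed

end


lemma enum_strict_mono:
  fixes f :: "nat \<Rightarrow> nat"
  assumes sm: "strict_mono f"
  shows "enumerate (range f) n = f n"
proof -
  have inf: "infinite (range f)"
    using sm by (simp add: strict_mono_imp_inj_on finite_image_iff)
  show ?thesis
  proof (induction n)
    case 0
    show ?case unfolding enumerate_0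
    proof (rule Least_equality)
      show "f 0 \<in> range f" by simp
      fix y assume "y \<in> range f"
      then obtain m where "y = f m" by auto
      then show "f 0 \<le> y" using sm by (simp add: strict_mono_less_eq)
    qed
  next
    case (Suc n)
    show ?case unfolding enumerate_Suc''[OF inf] Suc
    proof (rule Least_equality)
      show "f (Suc n) \<in> range f \<and> f n < f (Suc n)" using sm by (simp add: strict_mono_less)
      fix y assume "y \<in> range f \<and> f n < y"
      then obtain m where m: "y = f m" "f n < f m" by auto
      then have "n < m" using sm by (simp add: strict_mono_less)
      then show "f (Suc n) \<le> y" using sm m by (simp add: strict_mono_less_eq)
    qed
  qed
qed

context cfl begin

abbreviation "c \<equiv> concat_C \<alpha>"

lemma LBk:
  fixes p q :: int
  assumes "1 \<le> q" "nc p q"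
  shows "\<exists>k. int (c k) \<le> q \<and> wv k \<le> \<bar>real_of_int q * \<alpha> - real_of_int p\<bar>"
proof -
  from LB[OF assms] obtain m i where "i < L m" "int (qb m i) \<le> q" "wb m i \<le> \<bar>real_of_int q * \<alpha> - real_of_int p\<bar>"
    by blast
  then show ?thesis using pos_c pos_w by (intro exI[of _ "S m + i"]) simp
qed

lemma witk: "\<exists>p. nc p (int (c k)) \<and> \<bar>real (c k) * \<alpha> - real_of_int p\<bar> = wv k"
proof -
  obtain n i where ni: "i < L n" "k = S n + i" using idx_decomp by blast
  then show ?thesis using witness[OF ni(1)] pos_c[OF ni(1)] pos_w[OF ni(1)] by simp
qed

lemma fin_le: "finite {k. c k \<le> t}"
proof -
  have "{k. c k \<le> t} \<subseteq> {..<S (2 * t)}"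
  proof
    fix k assume "k \<in> {k. c k \<le> t}"
    then have ck: "c k \<le> t" by simp
    show "k \<in> {..<S (2 * t)}"
    proof (rule ccontr)
      assume "k \<notin> {..<S (2 * t)}"
      then have "S (2 * t) \<le> k" by simp
      then have "c (S (2 * t)) \<le> c k" by (rule c_mono)
      then show False using c_big[of t] ck by simp
    qed
  qed
  then show ?thesis using finite_subset by blast
qed

definition K :: "nat \<Rightarrow> nat" where "K t = Max {k. c k \<le> t}"

lemma K_in: "1 \<le> t \<Longrightarrow> c (K t) \<le> t"
proof -
  assume "1 \<le> t"
  then have "0 \<in> {k. c k \<le> t}" using c0 by simp
  then have "K t \<in> {k. c k \<le> t}" unfolding K_def using fin_le by (intro Max_in) auto
  then show ?thesis by simp
qed

lemma K_max: "c k \<le> t \<Longrightarrow> k \<le> K t"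
  unfolding K_def using fin_le by (intro Max_ge) auto

lemma psi_eq:
  assumes t1: "1 \<le> t"
  shows "psi2star \<alpha> (real t) = wv (K t)"
  unfolding psi2star_def
proof (rule cInf_eq_minimum)
  obtain p where p: "nc p (int (c (K t)))" "\<bar>real (c (K t)) * \<alpha> - real_of_int p\<bar> = wv (K t)"
    using witk by blast
  have "1 \<le> int (c (K t))" using c_ge1 by simp
  moreover have "real_of_int (int (c (K t))) \<le> real t" using K_in[OF t1] by simp
  ultimately show "wv (K t) \<in> {\<bar>real_of_int q * \<alpha> - real_of_int p\<bar> | p q :: int.
      1 \<le> q \<and> real_of_int q \<le> real t \<and>
      (\<forall>n. real_of_int p / real_of_int q \<noteq> real (cf_p \<alpha> n) / real (cf_q \<alpha> n))}"
    using p unfolding nc_def by (intro CollectI exI[of _ p] exI[of _ "int (c (K t))"]) simp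
next
  fix x assume "x \<in> {\<bar>real_of_int q * \<alpha> - real_of_int p\<bar> | p q :: int.
      1 \<le> q \<and> real_of_int q \<le> real t \<and>
      (\<forall>n. real_of_int p / real_of_int q \<noteq> real (cf_p \<alpha> n) / real (cf_q \<alpha> n))}"
  then obtain p q :: int where pq: "x = \<bar>real_of_int q * \<alpha> - real_of_int p\<bar>" "1 \<le> q"
    "real_of_int q \<le> real t" "nc p q" unfolding nc_def by blast
  from LBk[OF pq(2,4)] obtain k where k: "int (c k) \<le> q" "wv k \<le> x" using pq(1) by blast
  have "c k \<le> t" using k(1) pq(3) by linarith
  then have "k \<le> K t" by (rule K_max)
  then have "wv (K t) \<le> wv k" using wv_strict[of k "K t"] by (cases "k = K t") auto
  then show "wv (K t) \<le> x" using k(2) by simp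
qed

lemma frakX_eq: "frakX \<alpha> = range c"
proof (rule set_eqI)
  fix t
  show "t \<in> frakX \<alpha> \<longleftrightarrow> t \<in> range c"
  proof (cases "2 \<le> t")
    case False
    then consider "t = 0" | "t = 1" by linarith
    then show ?thesis
    proof cases
      case 1
      have "\<forall>k. c k \<noteq> 0" using c_ge1 by (metis not_one_le_zero)
      then have "t \<notin> range c" using 1 by (metis rangeE)
      then show ?thesis using 1 by (auto simp: frakX_def)
    next
      case 2
      then show ?thesis using c0 by (auto simp: frakX_def intro: range_eqI[of _ _ 0])
    qed
  next
    case True
    have e1: "real t - 1 = real (t - 1)" using True by (simp add: of_nat_diff)
    have p1: "psi2star \<alpha> (real t) = wv (K t)" using True by (intro psi_eq) simp
    have p2: "psi2star \<alpha> (real t - 1) = wv (K (t - 1))" unfolding e1 using True by (intro psi_eq) simp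
    have mem: "t \<in> frakX \<alpha> \<longleftrightarrow> wv (K t) < wv (K (t - 1))"
      using True p1 p2 by (auto simp: frakX_def)
    have iff1: "wv (K t) < wv (K (t - 1)) \<longleftrightarrow> K (t - 1) < K t"
    proof
      assume a: "wv (K t) < wv (K (t - 1))"
      show "K (t - 1) < K t"
      proof (rule ccontr)
        assume "\<not> K (t - 1) < K t"
        then have "K t \<le> K (t - 1)" by simp
        then have "wv (K (t - 1)) \<le> wv (K t)" using wv_strict[of "K t" "K (t - 1)"]
          by (cases "K t = K (t - 1)") auto
        then show False using a by simp
      qed
    next
      assume "K (t - 1) < K t" then show "wv (K t) < wv (K (t - 1))" by (rule wv_strict)
    qed
    have iff2: "K (t - 1) < K t \<longleftrightarrow> t \<in> range c"
    proof
      assume lt: "K (t - 1) < K t"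
      have "c (K t) \<le> t" using K_in True by simp
      moreover have "\<not> c (K t) \<le> t - 1" using K_max[of "K t" "t - 1"] lt by auto
      ultimately have "c (K t) = t" by simp
      then show "t \<in> range c" by (metis rangeI)
    next
      assume "t \<in> range c"
      then obtain k where k: "c k = t" by auto
      then have "k \<le> K t" using K_max by simp
      moreover have "K (t - 1) < k"
      proof (rule ccontr)
        assume "\<not> K (t - 1) < k"
        then have "c k \<le> c (K (t - 1))" using c_mono by simp
        moreover have "c (K (t - 1)) \<le> t - 1" using K_in True by simp
        ultimately show False using k True by simp
      qed
      ultimately show "K (t - 1) < K t" by simp
    qed
    show ?thesis using mem iff1 iff2 by simp
  qed
qed

lemma range_inf: "infinite (range c)"
proof
  assume "finite (range c)"
  then obtain B where B: "\<forall>x \<in> range c. x \<le> B" using finite_nat_set_iff_bounded_le by blast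
  then have "c (S (2 * B)) \<le> B" by simp
  then show False using c_big[of B] by simp
qed

definition F :: "nat set" where "F = first_occ c"

lemma least_in_F: "(LEAST j. c j = v) \<in> F" if "v \<in> range c" for v
proof -
  from that obtain k where "c k = v" by auto
  then have cl: "c (LEAST j. c j = v) = v" by (rule LeastI)
  have "v \<notin> c ` {..<(LEAST j. c j = v)}"
  proof
    assume "v \<in> c ` {..<(LEAST j. c j = v)}"
    then obtain i where "i < (LEAST j. c j = v)" "c i = v" by auto
    then show False using not_less_Least by blast
  qed
  then show ?thesis using cl by (simp add: F_def first_occ_def)
qed

lemma F_inf: "infinite F"
proof
  assume fin: "finite F"
  let ?g = "\<lambda>v. LEAST j. c j = v"
  have "?g ` range c \<subseteq> F" using least_in_F by blast
  then have "finite (?g ` range c)" using fin finite_subset by blast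
  moreover have "inj_on ?g (range c)"
  proof (rule inj_onI)
    fix x y assume "x \<in> range c" "y \<in> range c" "?g x = ?g y"
    then show "x = y" by (metis (mono_tags, lifting) LeastI rangeE)
  qed
  ultimately have "finite (range c)" using finite_image_iff by blast
  then show False using range_inf by simp
qed

lemma main_enum: "c (enumerate F k) = enumerate (range c) k"
proof -
  let ?h = "enumerate F"
  let ?f = "\<lambda>n. c (?h n)"
  have sm: "strict_mono ?f"
  proof (rule strict_monoI)
    fix i j :: nat assume ij: "i < j"
    then have hij: "?h i < ?h j" using F_inf by (simp add: enumerate_mono)
    then have le: "c (?h i) \<le> c (?h j)" using c_mono by simp
    have "?h j \<in> F" using F_inf by (rule enumerate_in_set)
    then have "c (?h j) \<notin> c ` {..<?h j}" by (simp add: F_def first_occ_def)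
    moreover have "c (?h i) \<in> c ` {..<?h j}" using hij by simp
    ultimately have "c (?h i) \<noteq> c (?h j)" by metis
    then show "c (?h i) < c (?h j)" using le by simp
  qed
  have rng: "range ?f = range c"
  proof
    show "range ?f \<subseteq> range c" by auto
    show "range c \<subseteq> range ?f"
    proof
      fix v assume v: "v \<in> range c"
      then have "(LEAST j. c j = v) \<in> F" by (rule least_in_F)
      then obtain n where n: "?h n = (LEAST j. c j = v)" using enumerate_Ex[OF F_inf] by blast
      from v obtain k where "c k = v" by auto
      then have "c (LEAST j. c j = v) = v" by (rule LeastI)
      then show "v \<in> range ?f" using n by (metis rangeI)
    qed
  qed
  show ?thesis using enum_strict_mono[OF sm, of k] rng by simp
qed

end

theorem mainTheorem9:
  fixes \<alpha> :: real
  assumes "\<alpha> \<notin> \<rat>" and "0 < \<alpha>" and "\<alpha> < 1"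
  shows "infinite (frakX \<alpha>) \<and> infinite (first_occ (concat_C \<alpha>)) \<and>
         (\<forall>k. concat_C \<alpha> (enumerate (first_occ (concat_C \<alpha>)) k) = enumerate (frakX \<alpha>) k)"
proof -
  interpret cfl \<alpha> using assms by unfold_locales
  show ?thesis using frakX_eq range_inf F_inf main_enum unfolding F_def by simp
qed

end
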